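(* Let $p$ be a real homogeneous polynomial of degree $d$ in $n$ real variables, let $\mathbb{S}^{n-1}\subset\mathbb{R}^n$ be the unit sphere and $dx$ the rotation-invariant probability measure on $\mathbb{S}^{n-1}$. For a positive integer $k$ define $\|p\|_{2k}=\left(\int_{\mathbb{S}^{n-1}}p^{2k}(x)\,dx\right)^{1/(2k)}$ and $\|p\|_\infty=\max_{x\in\mathbb{S}^{n-1}}|p(x)|$. Then $$\|p\|_{2k}\le\|p\|_\infty\le\binom{kd+n-1}{kd}^{1/(2k)}\|p\|_{2k}.$$ *)

theory Defs
  imports "HOL-Analysis.Analysis"
begin

definition homogeneous_poly :: "nat \<Rightarrow> (real^'n \<Rightarrow> real) \<Rightarrow> bool" where
  "homogeneous_poly d p \<longleftrightarrow>
     (\<exists>c :: ('n \<Rightarrow> nat) \<Rightarrow> real. \<forall>x.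
        p x = (\<Sum>\<alpha>\<in>{\<alpha>. (\<Sum>i\<in>UNIV. \<alpha> i) = d}. c \<alpha> * (\<Prod>i\<in>UNIV. (x $ i) ^ \<alpha> i)))"

text \<open>The rotation-invariant probability measure on the unit sphere S^(n-1):
  the image of the normalized Lebesgue measure on the unit ball under radial
  projection x / |x| (normalized cone measure = normalized surface measure).\<close>
definition sphere_measure :: "(real^'n) measure" where
  "sphere_measure = distr (uniform_measure lborel (ball 0 1)) borel (\<lambda>x. x /\<^sub>R norm x)"

definition Lnorm :: "nat \<Rightarrow> (real^'n \<Rightarrow> real) \<Rightarrow> real" where
  "Lnorm k p = (integral\<^sup>L sphere_measure (\<lambda>x. p x ^ (2 * k))) powr (1 / (2 * real k))"

definition sup_norm :: "(real^'n \<Rightarrow> real) \<Rightarrow> real" where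
  "sup_norm p = (SUP x\<in>sphere 0 1. \<bar>p x\<bar>)"

end

theory Submission
  imports Defs "HOL-Library.Multiset"
begin

definition mnm :: "('n::finite \<Rightarrow> nat) \<Rightarrow> real^'n \<Rightarrow> real" where
  "mnm \<alpha> x = (\<Prod>i\<in>UNIV. (x $ i) ^ \<alpha> i)"

definition Aset :: "nat \<Rightarrow> ('n::finite \<Rightarrow> nat) set" where
  "Aset m = {\<alpha>. (\<Sum>i\<in>UNIV. \<alpha> i) = m}"

lemma hp_def2: "homogeneous_poly d p \<longleftrightarrow> (\<exists>c. \<forall>x. p x = (\<Sum>\<alpha>\<in>Aset d. c \<alpha> * mnm \<alpha> x))"
  unfolding homogeneous_poly_def Aset_def mnm_def by simp

lemma finite_Aset: "finite (Aset m :: ('n::finite \<Rightarrow> nat) set)"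
proof -
  have "Aset m \<subseteq> PiE UNIV (\<lambda>_. {..m})"
    unfolding Aset_def
    by (auto simp: PiE_UNIV_domain intro!: member_le_sum[of _ UNIV, simplified])
  moreover have "finite (PiE (UNIV::'n set) (\<lambda>_. {..m}))" by (intro finite_PiE) auto
  ultimately show ?thesis by (rule finite_subset)
qed

lemma card_Aset: "card (Aset m :: ('n::finite \<Rightarrow> nat) set) \<le> (m + CARD('n) - 1) choose m"
proof -
  define F where "F = (\<lambda>\<alpha>::'n\<Rightarrow>nat. \<Sum>i\<in>UNIV. replicate_mset (\<alpha> i) i)"
  have cnt: "count (F \<alpha>) j = \<alpha> j" for \<alpha> j
    unfolding F_def by (simp add: count_sum)
  have "inj_on F (Aset m)"
    by (intro inj_onI) (metis cnt ext)
  moreover have "F ` Aset m \<subseteq> multisets_of_size UNIV m"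
    unfolding multisets_of_size_def Aset_def F_def by auto
  ultimately have "card (Aset m :: ('n \<Rightarrow> nat) set) \<le> card (multisets_of_size (UNIV::'n set) m)"
    by (rule card_inj_on_le[OF _ _ finite_multisets_of_size]) auto
  also have "\<dots> = (CARD('n) + m - 1) choose m" by (rule card_multisets_of_size) simp
  finally show ?thesis by (simp add: add.commute)
qed

lemma hp_add:
  assumes "homogeneous_poly m p" "homogeneous_poly m q"
  shows "homogeneous_poly m (\<lambda>x. p x + q x)"
proof -
  from assms obtain c c' where "\<forall>x. p x = (\<Sum>\<alpha>\<in>Aset m. c \<alpha> * mnm \<alpha> x)"
    "\<forall>x. q x = (\<Sum>\<alpha>\<in>Aset m. c' \<alpha> * mnm \<alpha> x)" by (auto simp: hp_def2)
  then show ?thesis unfolding hp_def2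
    by (intro exI[of _ "\<lambda>\<alpha>. c \<alpha> + c' \<alpha>"]) (simp add: sum.distrib distrib_right)
qed

lemma hp_scale:
  assumes "homogeneous_poly m p"
  shows "homogeneous_poly m (\<lambda>x. a * p x)"
proof -
  from assms obtain c where "\<forall>x. p x = (\<Sum>\<alpha>\<in>Aset m. c \<alpha> * mnm \<alpha> x)"
    by (auto simp: hp_def2)
  then show ?thesis unfolding hp_def2
    by (intro exI[of _ "\<lambda>\<alpha>. a * c \<alpha>"]) (simp add: sum_distrib_left mult.assoc)
qed

lemma hp_zero: "homogeneous_poly m (\<lambda>x. 0)"
  unfolding hp_def2 by (intro exI[of _ "\<lambda>_. 0"]) simp

lemma hp_sum:
  assumes "finite I" "\<And>i. i \<in> I \<Longrightarrow> homogeneous_poly m (f i)"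
  shows "homogeneous_poly m (\<lambda>x. \<Sum>i\<in>I. f i x)"
  using assms by (induction I rule: finite_induct) (auto intro: hp_add hp_zero)

lemma hp_const: "homogeneous_poly 0 (\<lambda>x. a)"
proof -
  have A0: "Aset 0 = {\<lambda>_. 0::nat}" unfolding Aset_def by auto
  show ?thesis unfolding hp_def2 A0
    by (intro exI[of _ "\<lambda>_. a"]) (simp add: mnm_def)
qed

lemma mono_add: "mnm (\<lambda>i. \<alpha> i + \<beta> i) x = mnm \<alpha> x * mnm \<beta> x"
  unfolding mnm_def by (simp add: power_add prod.distrib)

lemma hp_mult:
  fixes p q :: "real^'n \<Rightarrow> real"
  assumes "homogeneous_poly a p" "homogeneous_poly b q"
  shows "homogeneous_poly (a + b) (\<lambda>x. p x * q x)"
proof -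
  from assms obtain c c' where pc: "\<forall>x. p x = (\<Sum>\<alpha>\<in>Aset a. c \<alpha> * mnm \<alpha> x)"
    and qc: "\<forall>x. q x = (\<Sum>\<alpha>\<in>Aset b. c' \<alpha> * mnm \<alpha> x)" by (auto simp: hp_def2)
  define P where "P = (Aset a :: ('n\<Rightarrow>nat) set) \<times> (Aset b :: ('n\<Rightarrow>nat) set)"
  define s where "s = (\<lambda>pr::('n\<Rightarrow>nat)\<times>('n\<Rightarrow>nat). \<lambda>i. fst pr i + snd pr i)"
  define C where "C = (\<lambda>\<gamma>. \<Sum>pr\<in>{pr\<in>P. s pr = \<gamma>}. c (fst pr) * c' (snd pr))"
  have finP: "finite P" unfolding P_def using finite_Aset by auto
  have sP: "s ` P \<subseteq> Aset (a + b)"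
    unfolding P_def s_def Aset_def by (auto simp: sum.distrib)
  have "p x * q x = (\<Sum>\<gamma>\<in>Aset (a+b). C \<gamma> * mnm \<gamma> x)" for x
  proof -
    have "p x * q x = (\<Sum>pr\<in>P. c (fst pr) * c' (snd pr) * mnm (s pr) x)"
      unfolding pc[rule_format] qc[rule_format] sum_product P_def s_def
      by (simp add: sum.cartesian_product mono_add mult_ac case_prod_beta)
    also have "\<dots> = (\<Sum>\<gamma>\<in>Aset (a+b). \<Sum>pr\<in>{pr\<in>P. s pr = \<gamma>}. c (fst pr) * c' (snd pr) * mnm (s pr) x)"
      by (rule sum.group[symmetric]) (use finP sP finite_Aset in auto)
    also have "\<dots> = (\<Sum>\<gamma>\<in>Aset (a+b). C \<gamma> * mnm \<gamma> x)"
      unfolding C_def sum_distrib_right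
      by (intro sum.cong refl) auto
    finally show ?thesis .
  qed
  then show ?thesis unfolding hp_def2 by blast
qed

lemma hp_power:
  assumes "homogeneous_poly d p"
  shows "homogeneous_poly (k * d) (\<lambda>x. p x ^ k)"
proof (induction k)
  case 0 then show ?case using hp_const by simp
next
  case (Suc k)
  have "homogeneous_poly (d + k * d) (\<lambda>x. p x * p x ^ k)" by (rule hp_mult[OF assms Suc])
  then show ?case by (simp add: add.commute)
qed

lemma hp_prod:
  assumes "finite I" "\<And>i. i \<in> I \<Longrightarrow> homogeneous_poly (d i) (f i)"
  shows "homogeneous_poly (\<Sum>i\<in>I. d i) (\<lambda>x. \<Prod>i\<in>I. f i x)"
  using assms
proof (induction I rule: finite_induct)
  case empty then show ?case using hp_const by simp
next
  case (insert j I)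
  then show ?case by (simp add: hp_mult)
qed

lemma hp_coord: "homogeneous_poly 1 (\<lambda>x::real^'n. x $ j)"
proof -
  define e where "e = (\<lambda>i::'n. if i = j then 1::nat else 0)"
  have eA: "e \<in> Aset 1" unfolding Aset_def e_def by simp
  have me: "mnm e x = x $ j" for x
    unfolding mnm_def e_def by (simp add: if_distrib prod.If_cases) 
  have "(\<Sum>\<alpha>\<in>Aset 1. (if \<alpha> = e then 1 else 0) * mnm \<alpha> x) = x $ j" for x
  proof -
    have "(\<Sum>\<alpha>\<in>Aset 1. (if \<alpha> = e then 1 else 0) * mnm \<alpha> x) = (\<Sum>\<alpha>\<in>Aset 1. if \<alpha> = e then mnm \<alpha> x else 0)"
      by (intro sum.cong) auto
    also have "\<dots> = x $ j" using eA me by (subst sum.delta[OF finite_Aset]) simp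
    finally show ?thesis .
  qed
  then show ?thesis unfolding hp_def2
    by (intro exI[of _ "\<lambda>\<alpha>. if \<alpha> = e then 1 else 0"]) simp
qed

lemma hp_linear_comp:
  assumes "homogeneous_poly m q" "linear R"
  shows "homogeneous_poly m (\<lambda>x::real^'n. q (R x))"
proof -
  from assms obtain c where qc: "\<forall>x. q x = (\<Sum>\<alpha>\<in>Aset m. c \<alpha> * mnm \<alpha> x)" by (auto simp: hp_def2)
  have lin: "homogeneous_poly 1 (\<lambda>x. R x $ i)" for i
  proof -
    have eq: "(\<lambda>x. R x $ i) = (\<lambda>x. \<Sum>j\<in>UNIV. x $ j * R (axis j 1) $ i)"
      by (rule ext, rule linear_componentwise[OF assms(2)[folded linear_matrix_vector_mul_eq]])
    have "homogeneous_poly 1 (\<lambda>x::real^'n. \<Sum>j\<in>UNIV. x $ j * R (axis j 1) $ i)"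
    proof (rule hp_sum)
      fix j
      have "homogeneous_poly 1 (\<lambda>x::real^'n. R (axis j 1) $ i * x $ j)"
        by (rule hp_scale[OF hp_coord])
      then show "homogeneous_poly 1 (\<lambda>x::real^'n. x $ j * R (axis j 1) $ i)"
        by (simp add: mult.commute)
    qed simp
    then show ?thesis unfolding eq .
  qed
  have mnm: "homogeneous_poly m (\<lambda>x. mnm \<alpha> (R x))" if "\<alpha> \<in> Aset m" for \<alpha>
  proof -
    have "homogeneous_poly (\<Sum>i\<in>UNIV. \<alpha> i * 1) (\<lambda>x. \<Prod>i\<in>UNIV. R x $ i ^ \<alpha> i)"
      by (intro hp_prod hp_power lin) auto
    then show ?thesis using that unfolding mnm_def Aset_def by simp
  qed
  have "homogeneous_poly m (\<lambda>x. \<Sum>\<alpha>\<in>Aset m. c \<alpha> * mnm \<alpha> (R x))"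
    by (intro hp_sum hp_scale mnm finite_Aset)
  then show ?thesis using qc by simp
qed

lemma hp_continuous:
  assumes "homogeneous_poly m q"
  shows "continuous_on UNIV q"
proof -
  from assms obtain c where qc: "\<forall>x. q x = (\<Sum>\<alpha>\<in>Aset m. c \<alpha> * mnm \<alpha> x)" by (auto simp: hp_def2)
  have "q = (\<lambda>x. \<Sum>\<alpha>\<in>Aset m. c \<alpha> * (\<Prod>i\<in>UNIV. (x $ i) ^ \<alpha> i))"
    using qc by (auto simp: mnm_def)
  moreover have "continuous_on UNIV (\<lambda>x::real^'a. \<Sum>\<alpha>\<in>Aset m. c \<alpha> * (\<Prod>i\<in>UNIV. (x $ i) ^ \<alpha> i))"
    by (intro continuous_intros)
  ultimately show ?thesis by simp
qed


lemma orth_image_box_measure: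
  fixes g :: "'a::euclidean_space \<Rightarrow> 'a"
  assumes g: "orthogonal_transformation g"
  shows "emeasure lebesgue (g ` box l u) = emeasure lebesgue (box l u)"
proof -
  define Ob where "Ob = box l u"
  have openO: "open Ob" unfolding Ob_def by (rule open_box)
  define K where "K = {(c, r::real). r > 0 \<and> ball c r \<subseteq> Ob}"
  have cov: "\<exists>i. i \<in> K \<and> x \<in> ball (fst i) (snd i) \<and> snd i < d" if xO: "x \<in> Ob" and d0: "0 < d" for x d
  proof -
    obtain e where e: "e > 0" "ball x e \<subseteq> Ob" by (rule openE[OF openO xO])
    have "ball x (min e (d/2)) \<subseteq> ball x e" by (rule subset_ball) simp
    then have "ball x (min e (d/2)) \<subseteq> Ob" using e(2) by (rule subset_trans)
    moreover have "min e (d/2) > 0" using e(1) d0 by simp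
    ultimately have "(x, min e (d/2)) \<in> K" unfolding K_def by simp
    moreover have "x \<in> ball (fst (x, min e (d/2))) (snd (x, min e (d/2)))" using e d0 by simp
    moreover have "snd (x, min e (d/2)) < d" using d0 by simp
    ultimately show ?thesis by blast
  qed
  obtain C where C: "countable C" "C \<subseteq> K"
    and pw: "pairwise (\<lambda>i j. disjnt (ball (fst i) (snd i)) (ball (fst j) (snd j))) C"
    and neg: "negligible (Ob - (\<Union>i\<in>C. ball (fst i) (snd i)))"
    by (rule Vitali_covering_theorem_balls[of Ob K fst snd, OF cov])
  define X where "X = (\<lambda>i::'a \<times> real. ball (fst i) (snd i))"
  define U1 where "U1 = (\<Union>i\<in>C. X i)"
  have Ksub: "ball (fst i) (snd i) \<subseteq> Ob" if "i \<in> K" for i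
    using that unfolding K_def by (cases i) auto
  have U1O: "U1 \<subseteq> Ob" using C(2) Ksub unfolding U1_def X_def by blast
  have disj: "disjoint_family_on X C"
    using pw unfolding disjoint_family_on_def pairwise_def disjnt_def X_def by blast
  have inj: "inj g" using g orthogonal_transformation_inj by blast
  have lin: "linear g" using g orthogonal_transformation_linear by blast
  have disj2: "disjoint_family_on (\<lambda>i. g ` X i) C"
    unfolding disjoint_family_on_def
  proof (intro ballI impI)
    fix m n assume mn: "m \<in> C" "n \<in> C" "m \<noteq> n"
    then have "X m \<inter> X n = {}" using disj unfolding disjoint_family_on_def by blast
    then show "g ` X m \<inter> g ` X n = {}" using image_Int[OF inj, of "X m" "X n"] by simp
  qed
  have gX: "g ` X i = ball (g (fst i)) (snd i)" for i
    unfolding X_def by (rule image_orthogonal_transformation_ball[OF g])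
  have ballm: "emeasure lebesgue (g ` X i) = emeasure lebesgue (X i)" if "i \<in> C" for i
  proof -
    have "i \<in> K" using that C(2) by blast
    then have r: "snd i \<ge> 0" unfolding K_def by (cases i) auto
    show ?thesis unfolding gX unfolding X_def
      by (simp only: emeasure_lebesgue_ball_conv_unit_ball[OF r, of "g (fst i)"]
        emeasure_lebesgue_ball_conv_unit_ball[OF r, of "fst i"])
  qed
  have XS: "X i \<in> sets lebesgue" for i unfolding X_def by simp
  have gXS: "g ` X i \<in> sets lebesgue" for i unfolding gX by simp
  have n1: "Ob - U1 \<in> null_sets lebesgue"
    using neg unfolding U1_def X_def negligible_iff_null_sets .
  have n2: "g ` (Ob - U1) \<in> null_sets lebesgue"
    unfolding negligible_iff_null_sets[symmetric]
    by (rule negligible_differentiable_image_negligible[OF order_refl])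
       (use neg lin in \<open>auto simp: U1_def X_def intro: linear_imp_differentiable_on\<close>)

  have "emeasure lebesgue Ob = emeasure lebesgue (U1 \<union> (Ob - U1))"
    using U1O by (simp add: Un_absorb1)
  also have "\<dots> = emeasure lebesgue U1"
    by (rule emeasure_Un_null_set[OF _ n1]) (use XS C(1) in \<open>auto simp: U1_def\<close>)
  also have "\<dots> = (\<integral>\<^sup>+i. emeasure lebesgue (X i) \<partial>count_space C)"
    unfolding U1_def by (rule emeasure_UN_countable[OF XS C(1) disj])
  also have "\<dots> = (\<integral>\<^sup>+i. emeasure lebesgue (g ` X i) \<partial>count_space C)"
    by (intro nn_integral_cong) (simp add: ballm)
  also have "\<dots> = emeasure lebesgue (\<Union>i\<in>C. g ` X i)"
    by (rule emeasure_UN_countable[OF gXS C(1) disj2, symmetric])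
  also have "\<dots> = emeasure lebesgue (g ` U1)"
    unfolding U1_def by (simp add: image_UN)
  also have "\<dots> = emeasure lebesgue (g ` U1 \<union> g ` (Ob - U1))"
    by (rule emeasure_Un_null_set[OF _ n2, symmetric]) (use gXS C(1) in \<open>auto simp: U1_def image_UN\<close>)
  also have "g ` U1 \<union> g ` (Ob - U1) = g ` Ob"
    using U1O by auto
  finally show ?thesis unfolding Ob_def ..
qed

lemma distr_lborel_orth:
  fixes R :: "'a::euclidean_space \<Rightarrow> 'a"
  assumes R: "orthogonal_transformation R"
  shows "distr lborel borel R = lborel"
proof -
  have linR: "linear R" using R orthogonal_transformation_linear by blast
  have contR: "continuous_on UNIV R" using linR by (simp add: linear_continuous_on linear_linear)
  have measR: "R \<in> borel_measurable borel" using contR by (rule borel_measurable_continuous_onI)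
  define g where "g = inv R"
  have g: "orthogonal_transformation g" unfolding g_def by (rule orthogonal_transformation_inv[OF R])
  have bij: "bij R" using R orthogonal_transformation_bij by blast
  have pre: "R -` B = g ` B" for B
    unfolding g_def using bij by (simp add: bij_vimage_eq_inv_image)
  show ?thesis
  proof (rule lborel_eqI[symmetric])
    fix l u :: 'a
    assume lu: "\<And>b. b \<in> Basis \<Longrightarrow> l \<bullet> b \<le> u \<bullet> b"
    have opn: "open (R -` box l u)"
      by (rule continuous_open_vimage) (use contR in \<open>auto simp: continuous_on_eq_continuous_at\<close>)
    have "emeasure (distr lborel borel R) (box l u) = emeasure lborel (R -` box l u)"
      by (subst emeasure_distr) (use measR in auto)
    also have "\<dots> = emeasure lebesgue (R -` box l u)"
      using opn by simp
    also have "\<dots> = emeasure lebesgue (box l u)"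
      unfolding pre by (rule orth_image_box_measure[OF g])
    also have "\<dots> = (\<Prod>b\<in>Basis. (u - l) \<bullet> b)"
      using lu by (simp add: emeasure_lborel_box_eq)
    finally show "emeasure (distr lborel borel R) (box l u) = (\<Prod>b\<in>Basis. (u - l) \<bullet> b)" .
  qed simp
qed


abbreviation U where "U \<equiv> uniform_measure lborel (ball (0::real^'n::finite) 1)"
abbreviation proj :: "real^'n::finite \<Rightarrow> real^'n" where "proj x \<equiv> x /\<^sub>R norm x"

lemma proj_meas[measurable]: "(\<lambda>x::real^'n::finite. x /\<^sub>R norm x) \<in> borel_measurable borel"
  by measurable

lemma sets_sphere_measure[simp, measurable_cong]: "sets (sphere_measure :: (real^'n::finite) measure) = sets borel"
  by (simp add: sphere_measure_def)

lemma space_sphere_measure[simp]: "space (sphere_measure :: (real^'n::finite) measure) = UNIV"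
  by (simp add: sphere_measure_def)

lemma ball_emeasure_pos: "emeasure lborel (ball (0::'a::euclidean_space) 1) \<noteq> 0"
proof -
  have "measure lborel (ball (0::'a) 1) > 0" by (rule content_ball_pos) simp
  then show ?thesis
    using emeasure_lborel_ball_finite[of "0::'a" 1]
    by (simp add: emeasure_eq_ennreal_measure)
qed

lemma ball_emeasure_fin: "emeasure lborel (ball (0::'a::euclidean_space) 1) \<noteq> \<infinity>"
  using emeasure_lborel_ball_finite[of "0::'a" 1] by simp

lemma U_UNIV: "emeasure (U :: (real^'n::finite) measure) UNIV = 1"
  using ball_emeasure_pos[where 'a="real^'n"] ball_emeasure_fin[where 'a="real^'n"]
  by (simp add: ennreal_divide_self less_top)

lemma sphere_UNIV: "emeasure (sphere_measure :: (real^'n::finite) measure) UNIV = 1"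
  unfolding sphere_measure_def by (simp add: emeasure_distr U_UNIV)

lemma sphere_finite: "finite_measure (sphere_measure :: (real^'n::finite) measure)"
  by (rule finite_measureI) (simp add: sphere_UNIV)

lemma U_finite: "finite_measure (U :: (real^'n::finite) measure)"
  by (rule finite_measureI) (simp add: U_UNIV)

lemma sphere_measure_UNIV: "measure (sphere_measure :: (real^'n::finite) measure) UNIV = 1"
  by (simp add: measure_def sphere_UNIV)

lemma AE_sphere: "AE x in (sphere_measure :: (real^'n::finite) measure). norm x = 1"
proof -
  have "AE x in (U :: (real^'n) measure). norm (x /\<^sub>R norm x) = 1"
    by (rule AE_uniform_measureI) (use AE_lborel_singleton[of "0::real^'n"] in \<open>auto elim!: eventually_mono\<close>)
  then show ?thesis unfolding sphere_measure_def
    by (subst AE_distr_iff) auto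
qed

lemma integrable_sphere:
  fixes h :: "real^'n::finite \<Rightarrow> real"
  assumes h: "continuous_on UNIV h"
  shows "integrable sphere_measure h"
proof -
  have hm[measurable]: "h \<in> borel_measurable borel" using h by (rule borel_measurable_continuous_onI)
  have "compact (h ` cball 0 1)" by (rule compact_continuous_image) (use h in \<open>auto intro: continuous_on_subset\<close>)
  then obtain B where B: "\<And>y. y \<in> h ` cball 0 1 \<Longrightarrow> norm y \<le> B"
    using compact_imp_bounded bounded_iff by metis
  have pc: "x /\<^sub>R norm x \<in> cball 0 1" for x :: "real^'n"
    by (cases "x = 0") auto
  have "integrable U (\<lambda>x. h (x /\<^sub>R norm x))"
    by (rule finite_measure.integrable_const_bound[OF U_finite, of _ B]) (use B pc in auto)
  then show ?thesis unfolding sphere_measure_def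
    by (subst integrable_distr_eq) auto
qed

lemma integral_sphere:
  fixes h :: "real^'n::finite \<Rightarrow> real"
  assumes [measurable]: "h \<in> borel_measurable borel"
  shows "integral\<^sup>L sphere_measure h = integral\<^sup>L U (\<lambda>x. h (x /\<^sub>R norm x))"
  unfolding sphere_measure_def by (rule integral_distr) auto

lemma sphere_pos:
  fixes h :: "real^'n::finite \<Rightarrow> real"
  assumes h: "continuous_on UNIV h" and nn: "\<And>x. h x \<ge> 0"
    and z: "integral\<^sup>L sphere_measure h = 0" and x0: "norm x0 = 1"
  shows "h x0 = 0"
proof (rule ccontr)
  assume "h x0 \<noteq> 0"
  then have hx0: "h x0 > 0" using nn[of x0] by simp
  have hm[measurable]: "h \<in> borel_measurable borel" using h by (rule borel_measurable_continuous_onI)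
  have int: "integrable U (\<lambda>x. h (x /\<^sub>R norm x))"
    using integrable_sphere[OF h] unfolding sphere_measure_def by (subst (asm) integrable_distr_eq) auto
  have "integral\<^sup>L U (\<lambda>x. h (x /\<^sub>R norm x)) = 0" using z integral_sphere[OF hm] by simp
  then have "AE x in U. h (x /\<^sub>R norm x) = 0"
    using integral_nonneg_eq_0_iff_AE[OF int] nn by simp
  then have "AE x in lborel. x \<in> ball 0 1 \<longrightarrow> h (x /\<^sub>R norm x) = 0"
    using AE_uniform_measure[OF ball_emeasure_pos emeasure_lborel_ball_finite, THEN iffD1]
    by blast
  then have ae: "AE x in lebesgue. x \<in> ball 0 1 \<longrightarrow> h (x /\<^sub>R norm x) = 0"
    by (rule AE_completion)
  define T where "T = (ball (0::real^'n) 1 - {0}) \<inter> (\<lambda>x. h (x /\<^sub>R norm x)) -` {0<..}"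
  have cont: "continuous_on (ball (0::real^'n) 1 - {0}) (\<lambda>x. h (x /\<^sub>R norm x))"
    by (rule continuous_on_compose2[OF h]) (auto intro!: continuous_intros)
  have "open T" unfolding T_def
    by (rule continuous_open_preimage[OF cont]) (intro open_Diff open_ball closed_singleton, rule open_greaterThan)
  moreover have "AE x \<in> T in lebesgue. x \<in> {}"
    using ae by (rule eventually_mono) (simp add: T_def)
  moreover have "x0 /\<^sub>R 2 \<in> T"
  proof -
    have n: "norm (x0 /\<^sub>R 2) = 1/2" using x0 by simp
    have "(x0 /\<^sub>R 2) /\<^sub>R norm (x0 /\<^sub>R 2) = x0" unfolding n by simp
    then show ?thesis using n hx0 unfolding T_def by auto
  qed
  ultimately have "x0 /\<^sub>R 2 \<in> {}" by (rule mem_closed_if_AE_lebesgue_open[OF _ closed_empty])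
  then show False by simp
qed

lemma distr_U_orth:
  fixes R :: "real^'n::finite \<Rightarrow> real^'n"
  assumes R: "orthogonal_transformation R"
  shows "distr U borel R = U"
proof -
  have linR: "linear R" using R orthogonal_transformation_linear by blast
  have contR: "continuous_on UNIV R" using linR by (simp add: linear_continuous_on linear_linear)
  have measR[measurable]: "R \<in> borel_measurable borel" using contR by (rule borel_measurable_continuous_onI)
  have pb: "R -` ball 0 1 = ball 0 1" using orthogonal_transformation_norm[OF R] by auto
  show ?thesis
  proof (rule measure_eqI)
    fix A :: "(real^'n) set" assume A: "A \<in> sets (distr U borel R)"
    then have Ab[measurable]: "A \<in> sets borel" by simp
    have "emeasure (distr U borel R) A = emeasure U (R -` A)"
      by (subst emeasure_distr) auto
    also have "\<dots> = emeasure lborel (ball 0 1 \<inter> R -` A) / emeasure lborel (ball (0::real^'n) 1)"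
      by (subst emeasure_uniform_measure) (use measurable_sets_borel[OF measR Ab] in auto)
    also have "ball 0 1 \<inter> R -` A = R -` (ball 0 1 \<inter> A)" using pb by auto
    also have "emeasure lborel (R -` (ball 0 1 \<inter> A)) = emeasure (distr lborel borel R) (ball 0 1 \<inter> A)"
      by (subst emeasure_distr) auto
    also have "\<dots> = emeasure lborel (ball 0 1 \<inter> A)" by (simp add: distr_lborel_orth[OF R])
    also have "emeasure lborel (ball 0 1 \<inter> A) / emeasure lborel (ball (0::real^'n) 1) = emeasure U A"
      by (subst emeasure_uniform_measure) auto
    finally show "emeasure (distr U borel R) A = emeasure U A" .
  qed simp
qed

lemma sphere_orth_invariant:
  fixes R :: "real^'n::finite \<Rightarrow> real^'n" and h :: "real^'n \<Rightarrow> real"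
  assumes R: "orthogonal_transformation R" and hm[measurable]: "h \<in> borel_measurable borel"
  shows "integral\<^sup>L sphere_measure (\<lambda>x. h (R x)) = integral\<^sup>L sphere_measure h"
proof -
  have linR: "linear R" using R orthogonal_transformation_linear by blast
  have contR: "continuous_on UNIV R" using linR by (simp add: linear_continuous_on linear_linear)
  have measR[measurable]: "R \<in> borel_measurable borel" using contR by (rule borel_measurable_continuous_onI)
  have comm: "(\<lambda>x. R (x /\<^sub>R norm x)) = (\<lambda>x. R x /\<^sub>R norm (R x))"
    using orthogonal_transformation_norm[OF R] linear_scale[OF linR] by auto
  have "distr sphere_measure borel R = (sphere_measure :: (real^'n) measure)"
  proof -
    have "distr sphere_measure borel R = distr U borel ((\<lambda>x. R x) \<circ> (\<lambda>x::real^'n. x /\<^sub>R norm x))"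
      unfolding sphere_measure_def by (rule distr_distr) auto
    also have "(\<lambda>x. R x) \<circ> (\<lambda>x::real^'n. x /\<^sub>R norm x) = (\<lambda>x. x /\<^sub>R norm x) \<circ> R"
      using comm by (simp add: comp_def)
    also have "distr U borel ((\<lambda>x. x /\<^sub>R norm x) \<circ> R) = distr (distr U borel R) borel (\<lambda>x::real^'n. x /\<^sub>R norm x)"
      by (rule distr_distr[symmetric]) auto
    also have "\<dots> = sphere_measure" unfolding distr_U_orth[OF R] sphere_measure_def ..
    finally show ?thesis .
  qed
  then have "integral\<^sup>L sphere_measure h = integral\<^sup>L (distr sphere_measure borel R) h" by simp
  also have "\<dots> = integral\<^sup>L sphere_measure (\<lambda>x. h (R x))"
    by (rule integral_distr) auto
  finally show ?thesis ..
qed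


definition ip :: "(real^'n::finite \<Rightarrow> real) \<Rightarrow> (real^'n \<Rightarrow> real) \<Rightarrow> real" where
  "ip f g = integral\<^sup>L sphere_measure (\<lambda>x. f x * g x)"

abbreviation cont :: "(real^'n::finite \<Rightarrow> real) \<Rightarrow> bool" where
  "cont f \<equiv> continuous_on UNIV f"

lemma integrable_prod:
  fixes f g :: "real^'n::finite \<Rightarrow> real"
  shows "cont f \<Longrightarrow> cont g \<Longrightarrow> integrable sphere_measure (\<lambda>x. f x * g x)"
  by (intro integrable_sphere continuous_intros) auto

lemma ip_comm: "ip f g = ip g f"
  unfolding ip_def by (simp add: mult.commute)

lemma ip_add_left:
  fixes f g e :: "real^'n::finite \<Rightarrow> real"
  assumes "cont f" "cont g" "cont e"
  shows "ip (\<lambda>x. f x + g x) e = ip f e + ip g e"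
  unfolding ip_def distrib_right
  by (rule Bochner_Integration.integral_add) (use assms in \<open>auto intro: integrable_prod\<close>)

lemma ip_diff_left:
  fixes f g e :: "real^'n::finite \<Rightarrow> real"
  assumes "cont f" "cont g" "cont e"
  shows "ip (\<lambda>x. f x - g x) e = ip f e - ip g e"
  unfolding ip_def left_diff_distrib
  by (rule Bochner_Integration.integral_diff) (use assms in \<open>auto intro: integrable_prod\<close>)

lemma ip_scale_left: "ip (\<lambda>x. a * f x) e = a * ip f e"
  unfolding ip_def by (simp add: mult.assoc)

lemma ip_sum_left:
  fixes e :: "real^'n::finite \<Rightarrow> real"
  assumes "finite I" "\<And>i. i \<in> I \<Longrightarrow> cont (f i)" "cont e"
  shows "ip (\<lambda>x. \<Sum>i\<in>I. f i x) e = (\<Sum>i\<in>I. ip (f i) e)"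
  unfolding ip_def sum_distrib_right
  by (rule Bochner_Integration.integral_sum) (use assms in \<open>auto intro: integrable_prod\<close>)

lemma ip_cong_sphere:
  fixes f f' e :: "real^'n::finite \<Rightarrow> real"
  assumes "\<And>x. norm x = 1 \<Longrightarrow> f x = f' x" "cont f" "cont f'" "cont e"
  shows "ip f e = ip f' e"
  unfolding ip_def
proof (rule integral_cong_AE)
  show "(\<lambda>x. f x * e x) \<in> borel_measurable sphere_measure"
    using integrable_prod[OF assms(2,4)] by auto
  show "(\<lambda>x. f' x * e x) \<in> borel_measurable sphere_measure"
    using integrable_prod[OF assms(3,4)] by auto
  show "AE x in sphere_measure. f x * e x = f' x * e x"
    using AE_sphere by (rule eventually_mono) (simp add: assms(1))
qed

lemma ip_zero_imp:
  fixes h :: "real^'n::finite \<Rightarrow> real"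
  assumes "cont h" "ip h h = 0" "norm x = 1"
  shows "h x = 0"
proof -
  have "(\<lambda>y. h y * h y) x = 0"
    by (rule sphere_pos) (use assms in \<open>auto intro!: continuous_intros simp: ip_def\<close>)
  then show ?thesis by simp
qed

lemma ip_nonneg: "ip h h \<ge> 0"
  unfolding ip_def by (rule integral_nonneg_AE) simp

lemma mono_hp:
  assumes a: "\<alpha> \<in> Aset m"
  shows "homogeneous_poly m (mnm \<alpha>)"
proof -
  have "(\<Sum>\<beta>\<in>Aset m. (if \<beta> = \<alpha> then 1 else 0) * mnm \<beta> x) = mnm \<alpha> x" for x
  proof -
    have "(\<Sum>\<beta>\<in>Aset m. (if \<beta> = \<alpha> then 1 else 0) * mnm \<beta> x) = (\<Sum>\<beta>\<in>Aset m. if \<beta> = \<alpha> then mnm \<beta> x else 0)"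
      by (intro sum.cong) auto
    also have "\<dots> = mnm \<alpha> x" using a by (subst sum.delta[OF finite_Aset]) simp
    finally show ?thesis .
  qed
  then show ?thesis unfolding hp_def2
    by (intro exI[of _ "\<lambda>\<beta>. if \<beta> = \<alpha> then 1 else 0"]) simp
qed

lemma hp_cont: "homogeneous_poly m f \<Longrightarrow> cont f"
  by (rule hp_continuous)

lemma sum_delta_ip:
  fixes a :: "nat \<Rightarrow> real"
  assumes "j < r"
  shows "(\<Sum>i<r. a i * (if i = j then 1 else 0)) = a j"
proof -
  have "(\<Sum>i<r. a i * (if i = j then 1 else 0)) = (\<Sum>i<r. if i = j then a i else 0)"
    by (intro sum.cong) auto
  also have "\<dots> = a j" using assms by (subst sum.delta) auto
  finally show ?thesis .
qed

lemma gram_schmidt: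
  fixes B :: "('n::finite \<Rightarrow> nat) set"
  assumes "finite B" "B \<subseteq> Aset m"
  shows "\<exists>es. length es \<le> card B \<and> (\<forall>e\<in>set es. homogeneous_poly m e) \<and>
     (\<forall>i<length es. \<forall>j<length es. ip (es!i) (es!j) = (if i = j then 1 else 0)) \<and>
     (\<forall>c x. norm (x::real^'n) = 1 \<longrightarrow> (\<Sum>b\<in>B. c b * mnm b x) =
        (\<Sum>i<length es. ip (\<lambda>y. \<Sum>b\<in>B. c b * mnm b y) (es!i) * (es!i) x))"
  using assms
proof (induction B rule: finite_induct)
  case empty
  show ?case by (rule exI[of _ "[]"]) simp
next
  case (insert \<beta> B)
  from insert.IH insert.prems obtain es where
    len: "length es \<le> card B" and esV: "\<forall>e\<in>set es. homogeneous_poly m e"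
    and orth: "\<forall>i<length es. \<forall>j<length es. ip (es!i) (es!j) = (if i = j then 1 else 0)"
    and ex: "\<forall>c x. norm (x::real^'n) = 1 \<longrightarrow> (\<Sum>b\<in>B. c b * mnm b x) =
        (\<Sum>i<length es. ip (\<lambda>y. \<Sum>b\<in>B. c b * mnm b y) (es!i) * (es!i) x)"
    by auto
  define r where "r = length es"
  define e where "e = (\<lambda>i. es ! i)"
  define F where "F = (\<lambda>c y. \<Sum>b\<in>B. c b * mnm b (y::real^'n))"
  define F' where "F' = (\<lambda>c y. \<Sum>b\<in>insert \<beta> B. c b * mnm b (y::real^'n))"
  define g where "g = mnm \<beta>"
  have eV: "homogeneous_poly m (e i)" if "i < r" for i
    using esV that unfolding e_def r_def by auto
  have ec: "cont (e i)" if "i < r" for i using eV[OF that] by (rule hp_cont)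
  have orth': "ip (e i) (e j) = (if i = j then 1 else 0)" if "i < r" "j < r" for i j
    using orth that unfolding e_def r_def by auto
  have gV: "homogeneous_poly m g" unfolding g_def using insert.prems by (intro mono_hp) auto
  have gc: "cont g" using gV by (rule hp_cont)
  have FV: "homogeneous_poly m (F c)" for c
    unfolding F_def using insert.prems insert.hyps
    by (intro hp_sum hp_scale mono_hp) auto
  have Fc: "cont (F c)" for c using FV by (rule hp_cont)
  have exF: "F c x = (\<Sum>i<r. ip (F c) (e i) * e i x)" if "norm x = 1" for c x
    using ex that unfolding F_def e_def r_def by auto
  have F'eq: "F' c = (\<lambda>y. c \<beta> * g y + F c y)" for c
    unfolding F'_def F_def g_def using insert.hyps by (auto simp: sum.insert)
  have ipF': "ip (F' c) f = c \<beta> * ip g f + ip (F c) f" if "cont f" for c f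
    unfolding F'eq by (subst ip_add_left) (use gc Fc that in \<open>auto intro!: continuous_intros simp: ip_scale_left\<close>)
  define h where "h = (\<lambda>x. g x - (\<Sum>i<r. ip g (e i) * e i x))"
  have hV: "homogeneous_poly m h"
  proof -
    have "homogeneous_poly m (\<lambda>x. g x + (-1) * (\<Sum>i<r. ip g (e i) * e i x))"
      by (intro hp_add gV hp_scale hp_sum eV) auto
    then show ?thesis unfolding h_def by simp
  qed
  have hc: "cont h" using hV by (rule hp_cont)
  have ipsum: "ip (\<lambda>x. \<Sum>i<r. a i * e i x) f = (\<Sum>i<r. a i * ip (e i) f)" if "cont f" for a f
    by (subst ip_sum_left) (use ec that in \<open>auto intro!: continuous_intros simp: ip_scale_left\<close>)
  have iph: "ip h (e j) = 0" if "j < r" for j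
  proof -
    have "ip h (e j) = ip g (e j) - ip (\<lambda>x. \<Sum>i<r. ip g (e i) * e i x) (e j)"
      unfolding h_def by (rule ip_diff_left) (use gc ec that in \<open>auto intro!: continuous_intros\<close>)
    also have "\<dots> = ip g (e j) - (\<Sum>i<r. ip g (e i) * (if i = j then 1 else 0))"
      by (subst ipsum) (use ec that orth' in auto)
    also have "\<dots> = 0" using sum_delta_ip[OF that] by simp
    finally show ?thesis .
  qed
  define nh where "nh = ip h h"
  have card: "card (insert \<beta> B) = Suc (card B)" using insert.hyps by simp
  show ?case
  proof (cases "nh = 0")
    case True
    have h0: "h x = 0" if "norm x = 1" for x
      by (rule ip_zero_imp[OF hc]) (use True that in \<open>auto simp: nh_def\<close>)
    show ?thesis
    proof (rule exI[of _ es], intro conjI allI impI)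
      show "length es \<le> card (insert \<beta> B)" using len card by simp
      show "\<forall>e\<in>set es. homogeneous_poly m e" by fact
      show "ip (es!i) (es!j) = (if i = j then 1 else 0)" if "i < length es" "j < length es" for i j
        using orth that by auto
      fix c and x :: "real^'n" assume x: "norm x = 1"
      have gx: "g x = (\<Sum>i<r. ip g (e i) * e i x)" using h0[OF x] unfolding h_def by simp
      have "(\<Sum>b\<in>insert \<beta> B. c b * mnm b x) = F' c x" unfolding F'_def ..
      also have "\<dots> = c \<beta> * g x + F c x" unfolding F'eq ..
      also have "\<dots> = (\<Sum>i<r. (c \<beta> * ip g (e i) + ip (F c) (e i)) * e i x)"
        unfolding gx exF[OF x] sum_distrib_left sum.distrib[symmetric]
        by (intro sum.cong refl) (simp add: algebra_simps)
      also have "\<dots> = (\<Sum>i<r. ip (F' c) (e i) * e i x)"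
        by (intro sum.cong refl) (simp add: ipF' ec)
      finally show "(\<Sum>b\<in>insert \<beta> B. c b * mnm b x) =
        (\<Sum>i<length es. ip (\<lambda>y. \<Sum>b\<in>insert \<beta> B. c b * mnm b y) (es!i) * (es!i) x)"
        unfolding F'_def r_def e_def .
    qed
  next
    case False
    then have nhpos: "nh > 0" using ip_nonneg[of h] unfolding nh_def by simp
    define s where "s = sqrt nh"
    have spos: "s > 0" unfolding s_def using nhpos by simp
    have ss: "s * s = nh" unfolding s_def using nhpos by simp
    define en where "en = (\<lambda>x. (1/s) * h x)"
    have enV: "homogeneous_poly m en" unfolding en_def by (rule hp_scale[OF hV])
    have enc: "cont en" using enV by (rule hp_cont)
    have ipen_e: "ip en (e j) = 0" if "j < r" for j
      unfolding en_def ip_scale_left iph[OF that] by simp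
    have ipe_en: "ip (e j) en = 0" if "j < r" for j
      using ipen_e[OF that] by (simp add: ip_comm)
    have iphen: "ip h en = s"
    proof -
      have "ip h en = ip en h" by (rule ip_comm)
      also have "\<dots> = (1/s) * ip h h" unfolding en_def by (rule ip_scale_left)
      also have "\<dots> = s" using ss spos unfolding nh_def[symmetric] by (simp add: field_simps)
      finally show ?thesis .
    qed
    have ipenen: "ip en en = 1"
    proof -
      have "ip en en = (1/s) * ip h en" by (subst (1) en_def) (rule ip_scale_left)
      then show ?thesis using iphen spos by simp
    qed
    define es' where "es' = es @ [en]"
    have e'less: "es' ! i = e i" if "i < r" for i using that unfolding es'_def e_def r_def by (simp add: nth_append)
    have e'r: "es' ! r = en" unfolding es'_def r_def by simp
    have len': "length es' = Suc r" unfolding es'_def r_def by simp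
    show ?thesis
    proof (rule exI[of _ es'], intro conjI allI impI)
      show "length es' \<le> card (insert \<beta> B)" using len card len' unfolding r_def by simp
      show "\<forall>e\<in>set es'. homogeneous_poly m e" using esV enV unfolding es'_def by auto
      show "ip (es'!i) (es'!j) = (if i = j then 1 else 0)" if "i < length es'" "j < length es'" for i j
      proof -
        have i: "i < r \<or> i = r" and j: "j < r \<or> j = r" using that len' by auto
        show ?thesis
          using i j e'less e'r orth' ipen_e ipe_en ipenen by auto
      qed
      fix c and x :: "real^'n" assume x: "norm x = 1"
      have ipFen: "ip (F c) en = 0"
      proof -
        have "ip (F c) en = ip (\<lambda>y. \<Sum>i<r. ip (F c) (e i) * e i y) en"
          by (rule ip_cong_sphere) (use exF Fc ec enc in \<open>auto intro!: continuous_intros\<close>)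
        also have "\<dots> = (\<Sum>i<r. ip (F c) (e i) * ip (e i) en)" by (rule ipsum[OF enc])
        also have "\<dots> = 0" using ipe_en by simp
        finally show ?thesis .
      qed
      have ipgen: "ip g en = s"
      proof -
        have geq: "g = (\<lambda>y. h y + (\<Sum>i<r. ip g (e i) * e i y))" unfolding h_def by simp
        have "ip g en = ip h en + ip (\<lambda>y. \<Sum>i<r. ip g (e i) * e i y) en"
          by (subst geq, rule ip_add_left) (use hc ec enc in \<open>auto intro!: continuous_intros\<close>)
        also have "ip (\<lambda>y. \<Sum>i<r. ip g (e i) * e i y) en = 0"
          using ipsum[OF enc] ipe_en by simp
        finally show ?thesis using iphen by simp
      qed
      have "(\<Sum>i<length es'. ip (F' c) (es'!i) * (es'!i) x)
          = (\<Sum>i<r. ip (F' c) (e i) * e i x) + ip (F' c) en * en x"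
        unfolding len' by (simp add: e'less e'r)
      also have "ip (F' c) en * en x = c \<beta> * h x"
        using ipF'[OF enc] ipFen ipgen spos unfolding en_def by simp
      also have "(\<Sum>i<r. ip (F' c) (e i) * e i x) = c \<beta> * (\<Sum>i<r. ip g (e i) * e i x) + F c x"
        unfolding exF[OF x] sum_distrib_left sum.distrib[symmetric]
        by (intro sum.cong refl) (simp add: ipF' ec algebra_simps)
      also have "c \<beta> * (\<Sum>i<r. ip g (e i) * e i x) + F c x + c \<beta> * h x = c \<beta> * g x + F c x"
        unfolding h_def by (simp add: algebra_simps)
      also have "\<dots> = F' c x" unfolding F'eq ..
      finally show "(\<Sum>b\<in>insert \<beta> B. c b * mnm b x) =
        (\<Sum>i<length es'. ip (\<lambda>y. \<Sum>b\<in>insert \<beta> B. c b * mnm b y) (es'!i) * (es'!i) x)"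
        unfolding F'_def by simp
    qed
  qed
qed


lemma kernel_bound:
  fixes q :: "real^'n::finite \<Rightarrow> real"
  assumes hq: "homogeneous_poly m q" and x0: "norm x0 = 1"
  shows "(q x0)^2 \<le> real (card (Aset m :: ('n \<Rightarrow> nat) set)) * ip q q"
proof -
  obtain es where len: "length es \<le> card (Aset m :: ('n \<Rightarrow> nat) set)"
    and esV: "\<forall>e\<in>set es. homogeneous_poly m e"
    and orth: "\<forall>i<length es. \<forall>j<length es. ip (es!i) (es!j) = (if i = j then 1 else 0)"
    and ex: "\<forall>c x. norm (x::real^'n) = 1 \<longrightarrow> (\<Sum>b\<in>Aset m. c b * mnm b x) =
        (\<Sum>i<length es. ip (\<lambda>y. \<Sum>b\<in>Aset m. c b * mnm b y) (es!i) * (es!i) x)"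
    using gram_schmidt[OF finite_Aset order_refl, of m] by blast
  define r where "r = length es"
  define e where "e = (\<lambda>i. es ! i)"
  have eV: "homogeneous_poly m (e i)" if "i < r" for i
    using esV that unfolding e_def r_def by auto
  have ec: "cont (e i)" if "i < r" for i using eV[OF that] by (rule hp_cont)
  have orth': "ip (e i) (e j) = (if i = j then 1 else 0)" if "i < r" "j < r" for i j
    using orth that unfolding e_def r_def by auto
  have expV: "f x = (\<Sum>i<r. ip f (e i) * e i x)" if hf: "homogeneous_poly m f" and xn: "norm x = 1" for f x
  proof -
    obtain c where c: "\<forall>x. f x = (\<Sum>\<alpha>\<in>Aset m. c \<alpha> * mnm \<alpha> x)" using hf by (auto simp: hp_def2)
    then have feq: "f = (\<lambda>x. \<Sum>\<alpha>\<in>Aset m. c \<alpha> * mnm \<alpha> x)" by auto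
    show ?thesis using ex xn unfolding feq e_def r_def by blast
  qed
  have ipsum: "ip (\<lambda>x. \<Sum>i<r. a i * e i x) f = (\<Sum>i<r. a i * ip (e i) f)" if "cont f" for a f
    by (subst ip_sum_left) (use ec that in \<open>auto intro!: continuous_intros simp: ip_scale_left\<close>)
  define K where "K = (\<lambda>x. \<Sum>i<r. (e i x)^2)"
  have Knn: "K x \<ge> 0" for x unfolding K_def by (intro sum_nonneg) auto
  have F1: "(f x)^2 \<le> ip f f * K x" if hf: "homogeneous_poly m f" and x: "norm x = 1" for f x
  proof -
    have fc: "cont f" using hf by (rule hp_cont)
    have "ip f f = ip (\<lambda>y. \<Sum>i<r. ip f (e i) * e i y) f"
      by (rule ip_cong_sphere) (use expV[OF hf] fc ec in \<open>auto intro!: continuous_intros\<close>)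
    also have "\<dots> = (\<Sum>i<r. ip f (e i) * ip (e i) f)" by (rule ipsum[OF fc])
    also have "\<dots> = (\<Sum>i<r. (ip f (e i))^2)" by (simp add: ip_comm power2_eq_square)
    finally have ff: "ip f f = (\<Sum>i<r. (ip f (e i))^2)" .
    have "(f x)^2 = (\<Sum>i<r. ip f (e i) * e i x)^2" using expV[OF hf x] by simp
    also have "\<dots> \<le> (\<Sum>i<r. (ip f (e i))^2) * (\<Sum>i<r. (e i x)^2)" by (rule Cauchy_Schwarz_ineq_sum)
    finally show ?thesis unfolding ff K_def .
  qed
  have F2: "K x0 \<le> K y" if y: "norm y = 1" for y
  proof -
    define f where "f = (\<lambda>z. \<Sum>i<r. e i x0 * e i z)"
    have fV: "homogeneous_poly m f" unfolding f_def by (intro hp_sum hp_scale eV) auto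
    have fc: "cont f" using fV by (rule hp_cont)
    have ipfe: "ip f (e j) = e j x0" if "j < r" for j
    proof -
      have "ip f (e j) = (\<Sum>i<r. e i x0 * ip (e i) (e j))" unfolding f_def by (rule ipsum[OF ec[OF that]])
      also have "\<dots> = (\<Sum>i<r. e i x0 * (if i = j then 1 else 0))"
        by (intro sum.cong refl) (use orth' that in auto)
      also have "\<dots> = e j x0" by (rule sum_delta_ip[OF that])
      finally show ?thesis .
    qed
    have ipff: "ip f f = K x0"
    proof -
      have "ip f f = (\<Sum>i<r. e i x0 * ip (e i) f)" by (subst (1) f_def) (rule ipsum[OF fc])
      also have "\<dots> = (\<Sum>i<r. e i x0 * e i x0)"
        by (intro sum.cong refl) (simp add: ip_comm ipfe)
      finally show ?thesis unfolding K_def by (simp add: power2_eq_square)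
    qed
    have fx0: "f x0 = K x0" unfolding f_def K_def by (simp add: power2_eq_square)
    have "norm y = norm x0" using x0 y by simp
    then obtain R where R: "orthogonal_transformation R" "R y = x0"
      by (rule orthogonal_transformation_exists)
    define g where "g = (\<lambda>z. f (R z))"
    have gV: "homogeneous_poly m g" unfolding g_def
      by (rule hp_linear_comp[OF fV]) (use R orthogonal_transformation_linear in blast)
    have fm: "(\<lambda>z. f z * f z) \<in> borel_measurable borel"
      by (rule borel_measurable_continuous_onI) (use fc in \<open>auto intro!: continuous_intros\<close>)
    have ipgg: "ip g g = ip f f"
      unfolding ip_def g_def using sphere_orth_invariant[OF R(1) fm] by simp
    have gy: "g y = K x0" unfolding g_def R(2) fx0 ..
    have "(K x0)^2 \<le> K x0 * K y" using F1[OF gV y] unfolding gy ipgg ipff .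
    then show ?thesis using Knn[of x0] Knn[of y]
      by (cases "K x0 = 0") (auto simp: power2_eq_square)
  qed
  have Kc: "cont K" unfolding K_def by (intro continuous_intros ec) auto
  have intK: "integral\<^sup>L sphere_measure K = real r"
  proof -
    have "integral\<^sup>L sphere_measure K = (\<Sum>i<r. ip (e i) (e i))"
      unfolding K_def ip_def power2_eq_square
      by (rule Bochner_Integration.integral_sum) (use ec in \<open>auto intro: integrable_prod\<close>)
    also have "\<dots> = (\<Sum>i<r. 1)" by (intro sum.cong refl) (simp add: orth')
    finally show ?thesis by simp
  qed
  have "K x0 = integral\<^sup>L sphere_measure (\<lambda>y::real^'n. K x0)"
    by (simp add: sphere_measure_UNIV)
  also have "\<dots> \<le> integral\<^sup>L sphere_measure K"
  proof (rule integral_mono_AE)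
    show "integrable sphere_measure (\<lambda>y::real^'n. K x0)" by (rule integrable_sphere) simp
    show "integrable sphere_measure K" by (rule integrable_sphere[OF Kc])
    show "AE x in sphere_measure. K x0 \<le> K x" using AE_sphere by (rule eventually_mono) (rule F2)
  qed
  also have "\<dots> \<le> real (card (Aset m :: ('n \<Rightarrow> nat) set))" unfolding intK r_def using len by simp
  finally have Kb: "K x0 \<le> real (card (Aset m :: ('n \<Rightarrow> nat) set))" .
  have "(q x0)^2 \<le> ip q q * K x0" by (rule F1[OF hq x0])
  also have "\<dots> \<le> ip q q * real (card (Aset m :: ('n \<Rightarrow> nat) set))"
    by (rule mult_left_mono[OF Kb ip_nonneg])
  finally show ?thesis by (simp add: mult.commute)
qed


lemma pow_powr_inv:
  fixes M :: real
  assumes "M \<ge> 0" "n > 0"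
  shows "(M ^ n) powr (1 / real n) = M"
proof (cases "M = 0")
  case True then show ?thesis using assms by simp
next
  case False
  then have "M > 0" using assms by simp
  then have "(M ^ n) powr (1 / real n) = (M powr real n) powr (1 / real n)"
    by (simp add: powr_realpow)
  also have "\<dots> = M" using assms by (simp add: powr_powr)
  finally show ?thesis .
qed

theorem corollary3p1:
  fixes p :: "real^'n \<Rightarrow> real" and d k :: nat
  assumes "homogeneous_poly d p" and "k > 0"
  shows "Lnorm k p \<le> sup_norm p \<and>
         sup_norm p \<le> real ((k * d + CARD('n) - 1) choose (k * d)) powr (1 / (2 * real k)) * Lnorm k p"
proof -
  define m where "m = k * d"
  define q where "q = (\<lambda>x. p x ^ k)"
  have hq: "homogeneous_poly m q" unfolding m_def q_def by (rule hp_power[OF assms(1)])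
  have pc: "cont p" using assms(1) by (rule hp_cont)
  define S where "S = sphere (0::real^'n) 1"
  define I where "I = integral\<^sup>L sphere_measure (\<lambda>x::real^'n. p x ^ (2 * k))"
  define C where "C = real ((k * d + CARD('n) - 1) choose (k * d))"
  define M where "M = sup_norm p"
  have Lk: "Lnorm k p = I powr (1 / (2 * real k))" unfolding Lnorm_def I_def ..
  have ev: "p x ^ (2 * k) = \<bar>p x\<bar> ^ (2 * k)" for x by (simp add: power_even_abs)
  have Inn: "I \<ge> 0" unfolding I_def by (rule integral_nonneg_AE) (simp add: ev)
  have Sne: "S \<noteq> {}" unfolding S_def using norm_axis_1[of "undefined::'n"] by (auto simp: dist_norm)
  have bdd: "bdd_above ((\<lambda>x. \<bar>p x\<bar>) ` S)"
  proof -
    have "compact ((\<lambda>x. \<bar>p x\<bar>) ` S)" unfolding S_def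
      by (rule compact_continuous_image) (use pc in \<open>auto intro!: continuous_intros intro: continuous_on_subset\<close>)
    then show ?thesis by (rule bounded_imp_bdd_above[OF compact_imp_bounded])
  qed
  have Mup: "\<bar>p x\<bar> \<le> M" if "x \<in> S" for x
    unfolding M_def sup_norm_def S_def[symmetric] by (rule cSUP_upper[OF that bdd])
  have Mnn: "M \<ge> 0"
  proof -
    obtain x where "x \<in> S" using Sne by blast
    then have "\<bar>p x\<bar> \<le> M" by (rule Mup)
    then show ?thesis by (rule order_trans[OF abs_ge_zero])
  qed
  have k2: "2 * k > 0" using assms(2) by simp
  have part1: "Lnorm k p \<le> M"
  proof -
    have "I \<le> integral\<^sup>L sphere_measure (\<lambda>x::real^'n. M ^ (2 * k))"
      unfolding I_def
    proof (rule integral_mono_AE)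
      show "integrable sphere_measure (\<lambda>x::real^'n. p x ^ (2 * k))"
        by (rule integrable_sphere) (use pc in \<open>auto intro!: continuous_intros\<close>)
      show "integrable sphere_measure (\<lambda>x::real^'n. M ^ (2 * k))" by (rule integrable_sphere) simp
      show "AE x in sphere_measure. p x ^ (2 * k) \<le> M ^ (2 * k)"
        using AE_sphere
      proof (rule eventually_mono)
        fix x :: "real^'n" assume "norm x = 1"
        then have "\<bar>p x\<bar> \<le> M" using Mup unfolding S_def by simp
        then show "p x ^ (2 * k) \<le> M ^ (2 * k)" unfolding ev by (rule power_mono) simp
      qed
    qed
    also have "\<dots> = M ^ (2 * k)" by (simp add: sphere_measure_UNIV)
    finally have "I \<le> M ^ (2 * k)" .
    then have "I powr (1 / (2 * real k)) \<le> (M ^ (2 * k)) powr (1 / (2 * real k))"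
      by (rule powr_mono2[rotated 2]) (use Inn in auto)
    also have "\<dots> = M" using pow_powr_inv[OF Mnn k2] by simp
    finally show ?thesis unfolding Lk .
  qed
  have part2: "M \<le> C powr (1 / (2 * real k)) * Lnorm k p"
    unfolding M_def sup_norm_def S_def[symmetric]
  proof (rule cSUP_least[OF Sne])
    fix x assume x: "x \<in> S"
    then have xn: "norm x = 1" unfolding S_def by simp
    have Cnn: "C \<ge> 0" unfolding C_def by simp
    have "(q x)^2 \<le> real (card (Aset m :: ('n \<Rightarrow> nat) set)) * ip q q" by (rule kernel_bound[OF hq xn])
    also have "ip q q = I" unfolding ip_def q_def I_def by (simp add: power_add[symmetric] mult_2)
    also have "real (card (Aset m :: ('n \<Rightarrow> nat) set)) * I \<le> C * I"
      by (rule mult_right_mono[OF _ Inn]) (use card_Aset[of m, where 'n='n] in \<open>simp add: C_def m_def\<close>)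
    finally have "\<bar>p x\<bar> ^ (2 * k) \<le> C * I"
      unfolding q_def ev[symmetric] by (simp add: power_mult[symmetric] mult.commute)
    then have "(\<bar>p x\<bar> ^ (2 * k)) powr (1 / (2 * real k)) \<le> (C * I) powr (1 / (2 * real k))"
      by (rule powr_mono2[rotated 2]) auto
    also have "(\<bar>p x\<bar> ^ (2 * k)) powr (1 / (2 * real k)) = \<bar>p x\<bar>"
      using pow_powr_inv[OF abs_ge_zero k2] by simp
    also have "(C * I) powr (1 / (2 * real k)) = C powr (1 / (2 * real k)) * I powr (1 / (2 * real k))"
      using Cnn Inn by (simp add: powr_mult)
    finally show "\<bar>p x\<bar> \<le> C powr (1 / (2 * real k)) * Lnorm k p" unfolding Lk .
  qed
  show ?thesis using part1 part2 unfolding M_def C_def by simp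
qed


end
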